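(* For every $n\ge2$, \[\sum_{\pi\in\mathcal{A}_n}\mathbf{x}^{\mathrm{cDes}(\pi)}=\sum_{k=0}^{n-2}\ \sum_{T\in\mathrm{SYT}((n-k-1,1^k)\oplus(1))}\mathbf{x}^{\mathrm{cDes}(T)}.\]
   Context: $\mathcal{A}_n$ is the set of arc permutations: $\pi\in\mathfrak{S}_n$ (one-line notation) such that for every $1\le j\le n$, $\{\pi(1),\dots,\pi(j)\}$ is an interval in $\mathbb{Z}_n$ (a set of cyclically consecutive residues). For $\pi\in\mathfrak{S}_n$, $\mathrm{cDes}(\pi)=\{i\in[n]:\pi(i)>\pi(i+1)\}$ with $\pi(n+1):=\pi(1)$, and $\mathbf{x}^J=\prod_{i\in J}x_i$. The skew shape $(n-k-1,1^k)\oplus(1)$ consists of two connected components: the hook $(n-k-1,1^k)$ and a single cell placed strictly northeast of it (in a row above and a column to the right of all cells of the hook). A standard Young tableau $T$ of this shape (English notation: rows and columns increasing) has descent set $\mathrm{Des}(T)$, the set of $i\in[n-1]$ such that $i+1$ is in a strictly lower row than $i$, and cyclic descent set $\mathrm{cDes}(T)=\mathrm{Des}(T)\cup\{n\}$ if $|\mathrm{Des}(T)|=k$, and $\mathrm{cDes}(T)=\mathrm{Des}(T)$ otherwise. *)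

theory Defs
  imports "HOL-Combinatorics.Permutations"
begin

text \<open>Residues of Z_n are represented by 1..n. A subset of {1..n} is a cyclic
interval if it consists of l cyclically consecutive residues (0 \<le> l \<le> n).\<close>
definition cyc_interval :: "nat \<Rightarrow> nat set \<Rightarrow> bool" where
  "cyc_interval n S \<longleftrightarrow> (\<exists>a l. l \<le> n \<and> S = {(a + i) mod n + 1 | i. i < l})"

definition arc_perms :: "nat \<Rightarrow> (nat \<Rightarrow> nat) set" where
  "arc_perms n = {\<pi>. \<pi> permutes {1..n} \<and> (\<forall>j\<in>{1..n}. cyc_interval n (\<pi> ` {1..j}))}"

definition cDes_perm :: "nat \<Rightarrow> (nat \<Rightarrow> nat) \<Rightarrow> nat set" where
  "cDes_perm n \<pi> = {i \<in> {1..n}. \<pi> i > \<pi> (if i = n then 1 else i + 1)}"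

definition monom_x :: "(nat \<Rightarrow> 'a::comm_ring_1) \<Rightarrow> nat set \<Rightarrow> 'a" where
  "monom_x x J = (\<Prod>i\<in>J. x i)"

text \<open>Cells (row, column), English notation (rows numbered downward), of the skew
shape (n-k-1,1^k) \<oplus> (1): the hook occupies rows 1..k+1, with first row
columns 1..n-k-1 and first column rows 1..k+1; the single extra cell sits in
row 0 and column n-k, i.e. strictly north-east of the hook.\<close>
definition hook_plus_cell :: "nat \<Rightarrow> nat \<Rightarrow> (nat \<times> nat) set" where
  "hook_plus_cell n k =
     {(1, c) | c. 1 \<le> c \<and> c \<le> n - k - 1} \<union> {(r, 1) | r. 2 \<le> r \<and> r \<le> k + 1} \<union> {(0, n - k)}"

definition SYT :: "nat \<Rightarrow> (nat \<times> nat) set \<Rightarrow> ((nat \<times> nat) \<Rightarrow> nat) set" where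
  "SYT n D = {T. bij_betw T D {1..n} \<and> (\<forall>c. c \<notin> D \<longrightarrow> T c = 0) \<and>
      (\<forall>r c c'. (r, c) \<in> D \<and> (r, c') \<in> D \<and> c < c' \<longrightarrow> T (r, c) < T (r, c')) \<and>
      (\<forall>r r' c. (r, c) \<in> D \<and> (r', c) \<in> D \<and> r < r' \<longrightarrow> T (r, c) < T (r', c))}"

definition row_of :: "(nat \<times> nat) set \<Rightarrow> ((nat \<times> nat) \<Rightarrow> nat) \<Rightarrow> nat \<Rightarrow> nat" where
  "row_of D T i = fst (THE p. p \<in> D \<and> T p = i)"

definition Des_T :: "nat \<Rightarrow> (nat \<times> nat) set \<Rightarrow> ((nat \<times> nat) \<Rightarrow> nat) \<Rightarrow> nat set" where
  "Des_T n D T = {i \<in> {1..n - 1}. row_of D T (i + 1) > row_of D T i}"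

definition cDes_T :: "nat \<Rightarrow> nat \<Rightarrow> ((nat \<times> nat) \<Rightarrow> nat) \<Rightarrow> nat set" where
  "cDes_T n k T = (let d = Des_T n (hook_plus_cell n k) T in
     if card d = k then d \<union> {n} else d)"

end

theory Submission
  imports Defs
begin

lemma cyc_sub: "n \<ge> 1 \<Longrightarrow> cyc_interval n S \<Longrightarrow> S \<subseteq> {1..n}"
  unfolding cyc_interval_def
  by (auto simp: Suc_le_eq)

lemma lin_cyc: assumes "1 \<le> m" "M \<le> n" shows "cyc_interval n {m..M}"
proof -
  have "{m..M} = {(m - 1 + i) mod n + 1 | i. i < Suc M - m}"
  proof (rule set_eqI, rule iffI)
    fix x assume "x \<in> {m..M}"
    then have "x = (m - 1 + (x - m)) mod n + 1" "x - m < Suc M - m" using assms by auto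
    then show "x \<in> {(m - 1 + i) mod n + 1 | i. i < Suc M - m}" by blast
  next
    fix x assume "x \<in> {(m - 1 + i) mod n + 1 | i. i < Suc M - m}"
    then obtain i where i: "i < Suc M - m" "x = (m - 1 + i) mod n + 1" by blast
    then have "m - 1 + i < n" using assms by linarith
    then have "x = m + i" using i assms by simp
    then show "x \<in> {m..M}" using i by auto
  qed
  moreover have "Suc M - m \<le> n" using assms by linarith
  ultimately show ?thesis unfolding cyc_interval_def by blast
qed

lemma cyc_lin:
  assumes "n \<ge> 1" "cyc_interval n S" "n \<notin> S"
  shows "\<exists>m M. S = {m..M} \<and> S \<subseteq> {1..n-1}"
proof -
  obtain a l where al: "l \<le> n" "S = {(a + i) mod n + 1 | i. i < l}"
    using assms(2) unfolding cyc_interval_def by blast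
  define b where "b = a mod n"
  have bl: "b < n" using assms(1) b_def by simp
  have S: "S = {(b + i) mod n + 1 | i. i < l}" using al by (simp add: b_def mod_add_left_eq)
  have Ssub: "S \<subseteq> {1..n}" using cyc_sub assms by blast
  show ?thesis
  proof (cases "b + l < n")
    case True
    have "S = {b+1..b+l}"
    proof (rule set_eqI, rule iffI)
      fix x assume "x \<in> S"
      then obtain i where "i < l" "x = (b + i) mod n + 1" using S by blast
      then show "x \<in> {b+1..b+l}" using True by auto
    next
      fix x assume x: "x \<in> {b+1..b+l}"
      then have "x - 1 - b < l" "x = (b + (x - 1 - b)) mod n + 1" using True by auto
      then show "x \<in> S" using S by blast
    qed
    moreover have "S \<subseteq> {1..n-1}"
    proof
      fix t assume "t \<in> S"
      then have "t \<le> n" "t \<ge> 1" "t \<noteq> n" using Ssub assms(3) by auto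
      then show "t \<in> {1..n-1}" by simp
    qed
    ultimately show ?thesis by blast
  next
    case False
    have e: "b + (n - 1 - b) = n - 1" using bl by simp
    have "n - 1 - b < l" using False bl by linarith
    moreover have "(b + (n - 1 - b)) mod n + 1 = n" unfolding e using assms(1) by simp
    ultimately have "n \<in> S" unfolding S by (metis (mono_tags, lifting) mem_Collect_eq)
    then show ?thesis using assms(3) by simp
  qed
qed

lemma cyc_compl:
  assumes "n \<ge> 1" "cyc_interval n S"
  shows "cyc_interval n ({1..n} - S)"
proof -
  obtain a l where al: "l \<le> n" "S = {(a + i) mod n + 1 | i. i < l}"
    using assms(2) unfolding cyc_interval_def by blast
  define g where "g i = (a + i) mod n + 1" for i
  have inj: "inj_on g {0..<n}"
  proof
    fix i j assume ij: "i \<in> {0..<n}" "j \<in> {0..<n}" "g i = g j"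
    then have "(a + i) mod n = (a + j) mod n" by (simp add: g_def)
    then have "i mod n = j mod n" by (simp add: nat_mod_eq_iff)
    then show "i = j" using ij by simp
  qed
  have img: "g ` {0..<n} = {1..n}"
  proof (rule card_subset_eq)
    show "finite {1..n}" by simp
    show "g ` {0..<n} \<subseteq> {1..n}" using assms(1) by (auto simp: g_def Suc_le_eq)
    show "card (g ` {0..<n}) = card {1..n}" using card_image[OF inj] by simp
  qed
  have S: "S = g ` {0..<l}" using al by (auto simp: g_def)
  have T: "{(a + l + i) mod n + 1 | i. i < n - l} = g ` {l..<n}"
  proof (rule set_eqI, rule iffI)
    fix x assume "x \<in> {(a + l + i) mod n + 1 | i. i < n - l}"
    then obtain i where "i < n - l" "x = (a + l + i) mod n + 1" by blast
    then show "x \<in> g ` {l..<n}" unfolding g_def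
      by (intro image_eqI[where x = "l + i"]) (auto simp: add.assoc)
  next
    fix x assume "x \<in> g ` {l..<n}"
    then obtain j where "j \<in> {l..<n}" "x = g j" by blast
    then have "j - l < n - l" "x = (a + l + (j - l)) mod n + 1" by (auto simp: g_def)
    then show "x \<in> {(a + l + i) mod n + 1 | i. i < n - l}" by blast
  qed
  have "{1..n} - S = g ` {l..<n}"
  proof -
    have "{1..n} - S = g ` {0..<n} - g ` {0..<l}" using img S by simp
    also have "\<dots> = g ` ({0..<n} - {0..<l})"
      using inj al(1) by (intro inj_on_image_set_diff[symmetric]) auto
    also have "{0..<n} - {0..<l} = {l..<n}" by auto
    finally show ?thesis .
  qed
  then have "{1..n} - S = {(a + l + i) mod n + 1 | i. i < n - l}" using T by simp
  then show ?thesis unfolding cyc_interval_def by (intro exI[of _ "a+l"] exI[of _ "n-l"]) simp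
qed

definition is_int :: "nat set \<Rightarrow> bool" where "is_int X \<longleftrightarrow> (\<exists>m M. X = {m..M})"

lemma is_int_finite: "is_int X \<Longrightarrow> finite X"
  unfolding is_int_def by auto

lemma is_int_empty: "is_int {}"
  unfolding is_int_def by (intro exI[of _ 1] exI[of _ 0]) simp

lemma is_int_rem_min: assumes "is_int X" shows "is_int (X - {Min X})"
proof -
  obtain m M where X: "X = {m..M}" using assms is_int_def by blast
  show ?thesis
  proof (cases "m \<le> M")
    case True
    then have "Min X = m" using X by (simp add: Min_eq_iff)
    then have "X - {Min X} = {Suc m..M}" using X by auto
    then show ?thesis unfolding is_int_def by blast
  next
    case False
    then have "X - {Min X} = {}" using X by simp
    then show ?thesis using is_int_empty by metis
  qed
qed

lemma is_int_rem_max: assumes "is_int X" shows "is_int (X - {Max X})"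
proof -
  obtain m M where X: "X = {m..M}" using assms is_int_def by blast
  show ?thesis
  proof (cases "m < M")
    case True
    then have "Max X = M" using X by (simp add: Max_eq_iff)
    then have "X - {Max X} = {m..M-1}" using X True by auto
    then show ?thesis unfolding is_int_def by blast
  next
    case False
    then have "X - {Max X} = {}" using X by (cases "m = M") auto
    then show ?thesis using is_int_empty by metis
  qed
qed

lemma endpoint:
  assumes "is_int X" "is_int (X - {x})" "x \<in> X"
  shows "x = Min X \<or> x = Max X"
proof -
  obtain m M where X: "X = {m..M}" using assms is_int_def by blast
  obtain c d where Y: "X - {x} = {c..d}" using assms is_int_def by blast
  have mM: "m \<le> x" "x \<le> M" using X assms(3) by auto
  have mn: "Min X = m" "Max X = M" using X mM by (simp_all add: Min_eq_iff Max_eq_iff)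
  show ?thesis
  proof (rule ccontr)
    assume "\<not> ?thesis"
    then have "m < x" "x < M" using mn mM by auto
    then have "m \<in> X - {x}" "M \<in> X - {x}" using X by auto
    then have "c \<le> m" "M \<le> d" using Y by auto
    then have "x \<in> X - {x}" using Y \<open>m < x\<close> \<open>x < M\<close> by auto
    then show False by simp
  qed
qed

lemma is_int_cyc: assumes "is_int X" "X \<subseteq> {1..n}" shows "cyc_interval n X"
proof (cases "X = {}")
  case True
  then show ?thesis using lin_cyc[of 1 0 n] by simp
next
  case False
  obtain m M where X: "X = {m..M}" using assms is_int_def by blast
  then have "m \<le> M" using False by auto
  then have "m \<in> X" "M \<in> X" using X by auto
  then have "1 \<le> m" "M \<le> n" using assms(2) by auto
  then show ?thesis using X lin_cyc by simp
qed

lemma cyc_is_int: assumes "n \<ge> 1" "cyc_interval n X" "n \<notin> X" shows "is_int X" "X \<subseteq> {1..n-1}"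
  using cyc_lin[OF assms] unfolding is_int_def by blast+

definition chP :: "nat set \<Rightarrow> nat \<Rightarrow> nat set \<Rightarrow> nat" where
  "chP J j X = (if j - 1 \<in> J then Min X else Max X)"
definition chQ :: "nat set \<Rightarrow> nat \<Rightarrow> nat set \<Rightarrow> nat" where
  "chQ J j X = (if j \<in> J then Max X else Min X)"

lemma chP_in: "finite X \<Longrightarrow> X \<noteq> {} \<Longrightarrow> chP J j X \<in> X"
  unfolding chP_def by auto
lemma chQ_in: "finite X \<Longrightarrow> X \<noteq> {} \<Longrightarrow> chQ J j X \<in> X"
  unfolding chQ_def by auto
lemma is_int_chP: "is_int X \<Longrightarrow> is_int (X - {chP J j X})"
  unfolding chP_def using is_int_rem_min is_int_rem_max by auto
lemma is_int_chQ: "is_int X \<Longrightarrow> is_int (X - {chQ J j X})"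
  unfolding chQ_def using is_int_rem_min is_int_rem_max by auto

definition pv :: "nat \<Rightarrow> nat \<Rightarrow> nat" where "pv n v = (if v = 1 then n else v - 1)"
definition Jset :: "nat \<Rightarrow> nat \<Rightarrow> nat set set" where
  "Jset n v = {J. J \<subseteq> {1..n} \<and> v \<in> J \<and> pv n v \<notin> J}"
definition Sig :: "nat \<Rightarrow> (nat \<times> nat set) set" where
  "Sig n = Sigma {1..n} (Jset n)"

definition base :: "nat \<Rightarrow> nat \<Rightarrow> nat set \<Rightarrow> nat set" where
  "base n v J = (if n \<in> J then {1..v-1} else {n+1-v..n-1})"

fun PP :: "nat \<Rightarrow> nat \<Rightarrow> nat set \<Rightarrow> nat \<Rightarrow> nat set" where
  "PP n v J 0 = base n v J"
| "PP n v J (Suc t) = PP n v J t - {chP J (v - 1 - t) (PP n v J t)}"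

fun QQ :: "nat \<Rightarrow> nat \<Rightarrow> nat set \<Rightarrow> nat \<Rightarrow> nat set" where
  "QQ n v J 0 = {1..n-1} - base n v J"
| "QQ n v J (Suc t) = QQ n v J t - {chQ J (v + 1 + t) (QQ n v J t)}"

definition Pf where "Pf n v J j = PP n v J (v - 1 - j)"
definition Qf where "Qf n v J j = QQ n v J (j - (v + 1))"

definition rho :: "nat \<Rightarrow> nat \<Rightarrow> nat set \<Rightarrow> nat \<Rightarrow> nat" where
  "rho n v J j = (if j = v then n else if 1 \<le> j \<and> j < v then chP J j (Pf n v J j)
     else if v < j \<and> j \<le> n then chQ J j (Qf n v J j) else j)"

lemma cDes_lt: "1 \<le> i \<Longrightarrow> i < n \<Longrightarrow> i \<in> cDes_perm n p \<longleftrightarrow> p (i+1) < p i"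
  unfolding cDes_perm_def by auto
lemma cDes_n: "1 \<le> n \<Longrightarrow> n \<in> cDes_perm n p \<longleftrightarrow> p 1 < p n"
  unfolding cDes_perm_def by auto
lemma cDes_sub: "cDes_perm n p \<subseteq> {1..n}"
  unfolding cDes_perm_def by auto

context
  fixes n v :: nat and J :: "nat set"
  assumes n2: "n \<ge> 2" and v1: "1 \<le> v" and vn: "v \<le> n" and J: "J \<in> Jset n v"
begin

lemma J_sub: "J \<subseteq> {1..n}" and vJ: "v \<in> J" and pvJ: "pv n v \<notin> J"
  using J unfolding Jset_def by auto

lemma base_props: "is_int (base n v J)" "base n v J \<subseteq> {1..n-1}" "card (base n v J) = v - 1"
  unfolding base_def is_int_def using vn v1 n2 by auto

lemma base_sub_n: "base n v J \<subseteq> {1..n}"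
proof -
  have "{1..n-1} \<subseteq> {1..n}" by auto
  then show ?thesis using base_props(2) by blast
qed

lemma PP_props: "t \<le> v - 1 \<Longrightarrow> is_int (PP n v J t) \<and> PP n v J t \<subseteq> base n v J \<and> card (PP n v J t) = v - 1 - t"
proof (induction t)
  case 0
  then show ?case using base_props by simp
next
  case (Suc t)
  then have IH: "is_int (PP n v J t)" "PP n v J t \<subseteq> base n v J" "card (PP n v J t) = v - 1 - t" by auto
  have fin: "finite (PP n v J t)" using IH is_int_finite by blast
  have ne: "PP n v J t \<noteq> {}" using IH(3) Suc.prems by auto
  have inn: "chP J (v - 1 - t) (PP n v J t) \<in> PP n v J t" using chP_in fin ne by blast
  show ?case using IH is_int_chP inn fin by (auto simp: card_Diff_singleton)
qed

lemma Pf_props: "j \<le> v - 1 \<Longrightarrow> is_int (Pf n v J j) \<and> Pf n v J j \<subseteq> base n v J \<and> card (Pf n v J j) = j"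
  unfolding Pf_def using PP_props[of "v - 1 - j"] by auto

lemma Pf_step: assumes "1 \<le> j" "j \<le> v - 1"
  shows "Pf n v J (j - 1) = Pf n v J j - {rho n v J j}" "rho n v J j \<in> Pf n v J j"
proof -
  have r: "rho n v J j = chP J j (Pf n v J j)" using assms unfolding rho_def by auto
  have e: "v - 1 - (j - 1) = Suc (v - 1 - j)" "v - 1 - (v - 1 - j) = j" using assms by auto
  show "Pf n v J (j - 1) = Pf n v J j - {rho n v J j}"
    unfolding r Pf_def e(1) PP.simps e(2) ..
  have "finite (Pf n v J j)" "Pf n v J j \<noteq> {}" using Pf_props[of j] assms is_int_finite by auto
  then show "rho n v J j \<in> Pf n v J j" unfolding r using chP_in by blast
qed

lemma rho_P: "j \<le> v - 1 \<Longrightarrow> rho n v J ` {1..j} = Pf n v J j"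
proof (induction j)
  case 0
  have "card (Pf n v J 0) = 0" "finite (Pf n v J 0)" using Pf_props[of 0] is_int_finite by auto
  then show ?case by simp
next
  case (Suc j)
  have "rho n v J ` {1..Suc j} = insert (rho n v J (Suc j)) (rho n v J ` {1..j})"
    by (simp add: atLeastAtMostSuc_conv)
  also have "\<dots> = insert (rho n v J (Suc j)) (Pf n v J j)" using Suc by simp
  also have "\<dots> = Pf n v J (Suc j)" using Pf_step[of "Suc j"] Suc.prems by auto
  finally show ?case .
qed

lemma QQ0: "is_int ({1..n-1} - base n v J)" "card ({1..n-1} - base n v J) = n - v"
proof -
  have "{1..n-1} - base n v J = (if n \<in> J then {v..n-1} else {1..n-v})"
    unfolding base_def using v1 vn by auto
  then show "is_int ({1..n-1} - base n v J)" "card ({1..n-1} - base n v J) = n - v"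
    unfolding is_int_def using v1 vn by auto
qed

lemma QQ_props: "t \<le> n - v \<Longrightarrow> is_int (QQ n v J t) \<and> QQ n v J t \<subseteq> {1..n-1} - base n v J \<and> card (QQ n v J t) = n - v - t"
proof (induction t)
  case 0
  then show ?case using QQ0 by simp
next
  case (Suc t)
  then have IH: "is_int (QQ n v J t)" "QQ n v J t \<subseteq> {1..n-1} - base n v J" "card (QQ n v J t) = n - v - t" by auto
  have fin: "finite (QQ n v J t)" using IH is_int_finite by blast
  have ne: "QQ n v J t \<noteq> {}" using IH(3) Suc.prems by auto
  have inn: "chQ J (v + 1 + t) (QQ n v J t) \<in> QQ n v J t" using chQ_in fin ne by blast
  show ?case using IH is_int_chQ inn fin by (auto simp: card_Diff_singleton)
qed

lemma Qf_props: "v + 1 \<le> j \<Longrightarrow> j \<le> n + 1 \<Longrightarrow> is_int (Qf n v J j) \<and> Qf n v J j \<subseteq> {1..n-1} - base n v J \<and> card (Qf n v J j) = n + 1 - j"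
  unfolding Qf_def using QQ_props[of "j - (v + 1)"] by auto

lemma Qf_sub: "v + 1 \<le> j \<Longrightarrow> j \<le> n + 1 \<Longrightarrow> Qf n v J j \<subseteq> {1..n-1}"
  using Qf_props by blast

lemma Qf_sub_n: "v + 1 \<le> j \<Longrightarrow> j \<le> n + 1 \<Longrightarrow> Qf n v J j \<subseteq> {1..n}"
proof -
  have "{1..n-1} \<subseteq> {1..n}" by auto
  then show "v + 1 \<le> j \<Longrightarrow> j \<le> n + 1 \<Longrightarrow> Qf n v J j \<subseteq> {1..n}" using Qf_sub by blast
qed

lemma Qf_step: assumes "v + 1 \<le> j" "j \<le> n"
  shows "Qf n v J (j + 1) = Qf n v J j - {rho n v J j}" "rho n v J j \<in> Qf n v J j"
proof -
  have r: "rho n v J j = chQ J j (Qf n v J j)" using assms unfolding rho_def by auto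
  have e: "j + 1 - (v + 1) = Suc (j - (v + 1))" "v + 1 + (j - (v + 1)) = j" using assms by auto
  show "Qf n v J (j + 1) = Qf n v J j - {rho n v J j}"
    unfolding r Qf_def e(1) QQ.simps e(2) ..
  have "finite (Qf n v J j)" "Qf n v J j \<noteq> {}" using Qf_props[of j] assms is_int_finite by auto
  then show "rho n v J j \<in> Qf n v J j" unfolding r using chQ_in by blast
qed

lemma rho_Q_aux: "s \<le> n - v \<Longrightarrow> rho n v J ` {n + 1 - s..n} = Qf n v J (n + 1 - s)"
proof (induction s)
  case 0
  have "card (Qf n v J (n+1)) = 0" "finite (Qf n v J (n+1))" using Qf_props[of "n+1"] vn is_int_finite by auto
  then show ?case by simp
next
  case (Suc s)
  define j where "j = n - s"
  have j: "n + 1 - Suc s = j" "n + 1 - s = j + 1" "v + 1 \<le> j" "j \<le> n" using Suc.prems vn by (auto simp: j_def)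
  have "{j..n} = insert j {j+1..n}" using j by auto
  then have "rho n v J ` {j..n} = insert (rho n v J j) (rho n v J ` {j+1..n})" by simp
  also have "\<dots> = insert (rho n v J j) (Qf n v J (j+1))" using Suc j by simp
  also have "\<dots> = Qf n v J j" using Qf_step[of j] j by auto
  finally show ?case unfolding j .
qed

lemma rho_Q: "v + 1 \<le> j \<Longrightarrow> j \<le> n + 1 \<Longrightarrow> rho n v J ` {j..n} = Qf n v J j"
  using rho_Q_aux[of "n + 1 - j"] by auto

lemma rho_v: "rho n v J v = n" unfolding rho_def by simp

lemma Pf_base: "Pf n v J (v - 1) = base n v J" unfolding Pf_def by simp
lemma Qf_base: "Qf n v J (v + 1) = {1..n-1} - base n v J" unfolding Qf_def by simp

lemma rho_img: "rho n v J ` {1..n} = {1..n}"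
proof -
  have "{1..n} = {1..v-1} \<union> {v} \<union> {v+1..n}" using v1 vn by auto
  then have "rho n v J ` {1..n} = rho n v J ` {1..v-1} \<union> {rho n v J v} \<union> rho n v J ` {v+1..n}"
    by (metis image_Un image_insert image_empty)
  also have "\<dots> = base n v J \<union> {n} \<union> ({1..n-1} - base n v J)"
    using rho_P[of "v-1"] rho_Q[of "v+1"] vn Pf_base Qf_base rho_v by simp
  also have "\<dots> = {1..n}"
  proof -
    have "{1..n-1} \<union> {n} = {1..n}" using n2 by auto
    then show ?thesis using base_props(2) by blast
  qed
  finally show ?thesis .
qed

lemma rho_inj: "inj_on (rho n v J) {1..n}"
proof (rule eq_card_imp_inj_on)
  have "card (rho n v J ` {1..n}) = card {1..n}" by (simp only: rho_img)
  then show "card (rho n v J ` {1..n}) = card {1..n}" .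
qed simp

lemma rho_perm: "rho n v J permutes {1..n}"
proof (rule bij_imp_permutes)
  show "bij_betw (rho n v J) {1..n} {1..n}" using rho_inj rho_img by (simp add: bij_betw_def)
  fix x assume "x \<notin> {1..n}"
  then show "rho n v J x = x" using v1 vn unfolding rho_def by auto
qed

lemma rho_arc: "rho n v J \<in> arc_perms n"
  unfolding arc_perms_def
proof (intro CollectI conjI ballI rho_perm)
  fix j assume j: "j \<in> {1..n}"
  show "cyc_interval n (rho n v J ` {1..j})"
  proof (cases "j \<le> v - 1")
    case True
    then have "is_int (Pf n v J j)" "Pf n v J j \<subseteq> {1..n}" using Pf_props[of j] base_sub_n by auto
    then show ?thesis using rho_P True is_int_cyc by simp
  next
    case False
    have "{1..j} = {1..n} - {j+1..n}" using j by auto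
    then have "rho n v J ` {1..j} = rho n v J ` {1..n} - rho n v J ` {j+1..n}"
      using rho_inj by (simp add: inj_on_image_set_diff)
    also have "\<dots> = {1..n} - Qf n v J (j+1)" using rho_img rho_Q[of "j+1"] False j by auto
    finally have e: "rho n v J ` {1..j} = {1..n} - Qf n v J (j+1)" .
    have "is_int (Qf n v J (j+1))" "Qf n v J (j+1) \<subseteq> {1..n}" using Qf_props[of "j+1"] Qf_sub_n[of "j+1"] False j by auto
    then have "cyc_interval n (Qf n v J (j+1))" using is_int_cyc by blast
    then show ?thesis unfolding e using cyc_compl n2 by simp
  qed
qed

end

lemma Min_lt: "finite X \<Longrightarrow> y \<in> X \<Longrightarrow> y \<noteq> Min X \<Longrightarrow> Min X < (y::nat)"
  using Min_le le_neq_implies_less by metis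
lemma Max_gt: "finite X \<Longrightarrow> y \<in> X \<Longrightarrow> y \<noteq> Max X \<Longrightarrow> y < (Max X::nat)"
  using Max_ge le_neq_implies_less by metis

context
  fixes n v :: nat and J :: "nat set"
  assumes n2: "n \<ge> 2" and v1: "1 \<le> v" and vn: "v \<le> n" and J: "J \<in> Jset n v"
begin

lemma rho_lt_P: "1 \<le> j \<Longrightarrow> j \<le> v - 1 \<Longrightarrow> rho n v J j \<in> base n v J \<and> rho n v J j < n"
  using Pf_step[OF n2 v1 vn J, of j] Pf_props[OF n2 v1 vn J, of j] base_props(2)[OF n2 v1 vn J]
  by fastforce

lemma rho_lt_Q: "v + 1 \<le> j \<Longrightarrow> j \<le> n \<Longrightarrow> rho n v J j \<in> {1..n-1} - base n v J \<and> rho n v J j < n"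
  using Qf_step[OF n2 v1 vn J, of j] Qf_props[OF n2 v1 vn J, of j] by fastforce

lemma rho_cDes: "cDes_perm n (rho n v J) = J"
proof (rule set_eqI)
  fix i
  let ?r = "rho n v J"
  have Jsub: "J \<subseteq> {1..n}" "v \<in> J" "pv n v \<notin> J" using J unfolding Jset_def by auto
  show "i \<in> cDes_perm n ?r \<longleftrightarrow> i \<in> J"
  proof (cases "1 \<le> i \<and> i \<le> n")
    case False
    have "i \<notin> cDes_perm n ?r" using cDes_sub[of n ?r] False by auto
    moreover have "i \<notin> J" using Jsub(1) False by auto
    ultimately show ?thesis by simp
  next
    case True
    then have i: "1 \<le> i" "i \<le> n" by auto
    consider "i < n" "i + 1 < v" | "i < n" "i + 1 = v" | "i < n" "i = v" | "i < n" "v < i" | "i = n"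
      using i by linarith
    then show ?thesis
    proof cases
      case 1
      define j where "j = i + 1"
      define X where "X = Pf n v J j"
      have j: "1 \<le> j" "j \<le> v - 1" "j - 1 = i" using 1 i by (auto simp: j_def)
      have rj: "?r j = chP J j X" using j unfolding rho_def X_def by auto
      have st: "Pf n v J i = X - {?r j}" using Pf_step[OF n2 v1 vn J j(1,2)] j(3) by (simp add: X_def)
      have ri: "?r i \<in> Pf n v J i" using Pf_step[OF n2 v1 vn J, of i] i j by auto
      have inX: "?r i \<in> X" "?r i \<noteq> ?r j" using ri st by auto
      have fin: "finite X" using Pf_props[OF n2 v1 vn J, of j] j is_int_finite unfolding X_def by auto
      have c: "i \<in> cDes_perm n ?r \<longleftrightarrow> ?r j < ?r i" using cDes_lt[of i n ?r] 1 i by (simp add: j_def)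
      show ?thesis
      proof (cases "i \<in> J")
        case True
        then have "?r j = Min X" using rj j unfolding chP_def by simp
        then have "?r j < ?r i" using Min_lt[OF fin inX(1)] inX(2) by metis
        then show ?thesis using c True by simp
      next
        case False
        then have "?r j = Max X" using rj j unfolding chP_def by simp
        then have "?r i < ?r j" using Max_gt[OF fin inX(1)] inX(2) by metis
        then show ?thesis using c False by simp
      qed
    next
      case 2
      have "?r i < n" using rho_lt_P[of i] 2 i by auto
      moreover have "?r (i+1) = n" using 2 rho_v[OF n2 v1 vn J] by simp
      moreover have "pv n v = i" using 2 i unfolding pv_def by auto
      ultimately show ?thesis using cDes_lt[of i n ?r] 2 i Jsub by auto
    next
      case 3
      have "?r (i+1) < n" using rho_lt_Q[of "i+1"] 3 by auto
      moreover have "?r i = n" using 3 rho_v[OF n2 v1 vn J] by simp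
      ultimately show ?thesis using cDes_lt[of i n ?r] 3 i Jsub by auto
    next
      case 4
      define X where "X = Qf n v J i"
      have rj: "?r i = chQ J i X" using 4 unfolding rho_def X_def by auto
      have st: "Qf n v J (i+1) = X - {?r i}" using Qf_step[OF n2 v1 vn J, of i] 4 by (simp add: X_def)
      have ri: "?r (i+1) \<in> Qf n v J (i+1)" using Qf_step[OF n2 v1 vn J, of "i+1"] 4 by auto
      have inX: "?r (i+1) \<in> X" "?r (i+1) \<noteq> ?r i" using ri st by auto
      have fin: "finite X" using Qf_props[OF n2 v1 vn J, of i] 4 is_int_finite unfolding X_def by auto
      have c: "i \<in> cDes_perm n ?r \<longleftrightarrow> ?r (i+1) < ?r i" using cDes_lt[of i n ?r] 4 i by simp
      show ?thesis
      proof (cases "i \<in> J")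
        case True
        then have "?r i = Max X" using rj unfolding chQ_def by simp
        then have "?r (i+1) < ?r i" using Max_gt[OF fin inX(1)] inX(2) by metis
        then show ?thesis using c True by simp
      next
        case False
        then have "?r i = Min X" using rj unfolding chQ_def by simp
        then have "?r i < ?r (i+1)" using Min_lt[OF fin inX(1)] inX(2) by metis
        then show ?thesis using c False by simp
      qed
    next
      case 5
      have c: "i \<in> cDes_perm n ?r \<longleftrightarrow> ?r 1 < ?r n" using cDes_n[of n ?r] 5 n2 by simp
      consider "v = n" | "v = 1" | "1 < v" "v < n" using v1 vn by linarith
      then show ?thesis
      proof cases
        case 1
        have "?r 1 < n" using rho_lt_P[of 1] 1 n2 by auto
        then show ?thesis using c 1 5 rho_v[OF n2 v1 vn J] Jsub by auto
      next
        case 2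
        have "?r n < n" using rho_lt_Q[of n] 2 n2 by auto
        moreover have "pv n v = n" using 2 unfolding pv_def by simp
        ultimately show ?thesis using c 2 5 rho_v[OF n2 v1 vn J] Jsub by auto
      next
        case 3
        have a: "?r 1 \<in> base n v J" using rho_lt_P[of 1] 3 by auto
        have b: "?r n \<in> {1..n-1} - base n v J" using rho_lt_Q[of n] 3 by auto
        show ?thesis
        proof (cases "n \<in> J")
          case True
          then have "base n v J = {1..v-1}" unfolding base_def by simp
          then have "?r 1 < ?r n" using a b by auto
          then show ?thesis using c True 5 by simp
        next
          case False
          then have "base n v J = {n+1-v..n-1}" unfolding base_def by simp
          then have "?r n < ?r 1" using a b by auto
          then show ?thesis using c False 5 by simp
        qed
      qed
    qed
  qed
qed

end

context
  fixes n v :: nat and p :: "nat \<Rightarrow> nat"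
  assumes n2: "n \<ge> 2" and v1: "1 \<le> v" and vn: "v \<le> n" and pA: "p \<in> arc_perms n" and pv: "p v = n"
begin

lemma pperm: "p permutes {1..n}" using pA unfolding arc_perms_def by auto
lemma parc: "j \<in> {1..n} \<Longrightarrow> cyc_interval n (p ` {1..j})" using pA unfolding arc_perms_def by auto
lemma pinj: "inj_on p {1..n}" using pperm permutes_inj_on by blast
lemma pimg: "p ` {1..n} = {1..n}" using pperm permutes_image by blast
lemma pin: "j \<in> {1..n} \<Longrightarrow> p j \<in> {1..n}" using pimg by blast
lemma peq: "i \<in> {1..n} \<Longrightarrow> j \<in> {1..n} \<Longrightarrow> p i = p j \<longleftrightarrow> i = j"
  using pinj inj_on_eq_iff by metis
lemma pout: "j \<notin> {1..n} \<Longrightarrow> p j = j" using pperm permutes_not_in by metis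

lemma img_diff: "A \<subseteq> {1..n} \<Longrightarrow> B \<subseteq> {1..n} \<Longrightarrow> p ` (A - B) = p ` A - p ` B"
  by (rule inj_on_image_set_diff[OF pinj]) auto

lemma p_suffix: "j \<le> n \<Longrightarrow> p ` {j+1..n} = {1..n} - p ` {1..j}"
proof -
  assume j: "j \<le> n"
  have "{j+1..n} = {1..n} - {1..j}" using j by auto
  then have "p ` {j+1..n} = p ` {1..n} - p ` {1..j}" using img_diff[of "{1..n}" "{1..j}"] j by auto
  then show ?thesis using pimg by simp
qed

lemma P_int: assumes "j \<le> v - 1" shows "is_int (p ` {1..j})" "p ` {1..j} \<subseteq> {1..n-1}"
proof -
  have "is_int (p ` {1..j}) \<and> p ` {1..j} \<subseteq> {1..n-1}"
  proof (cases "j = 0")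
    case True then show ?thesis using is_int_empty by simp
  next
    case False
    have nn: "n \<notin> p ` {1..j}"
    proof
      assume "n \<in> p ` {1..j}"
      then obtain i where i: "i \<in> {1..j}" "p i = p v" using pv by auto
      then have "i \<in> {1..n}" "i \<noteq> v" using assms v1 vn by auto
      then show False using peq[of i v] i v1 vn by auto
    qed
    have "cyc_interval n (p ` {1..j})" using parc[of j] False assms vn by auto
    then show ?thesis using cyc_is_int[OF _ _ nn] n2 by auto
  qed
  then show "is_int (p ` {1..j})" "p ` {1..j} \<subseteq> {1..n-1}" by auto
qed

lemma Q_int: assumes "v + 1 \<le> j" "j \<le> n + 1" shows "is_int (p ` {j..n})" "p ` {j..n} \<subseteq> {1..n-1}"
proof -
  have e: "p ` {j..n} = {1..n} - p ` {1..j-1}" using p_suffix[of "j-1"] assms by auto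
  have "j - 1 \<in> {1..n}" using assms v1 by auto
  then have "cyc_interval n (p ` {1..j-1})" using parc[of "j-1"] by auto
  then have c: "cyc_interval n (p ` {j..n})" unfolding e using cyc_compl n2 by auto
  have nn: "n \<notin> p ` {j..n}"
  proof
    assume "n \<in> p ` {j..n}"
    then obtain i where i: "i \<in> {j..n}" "p i = p v" using pv by auto
    then have "i \<in> {1..n}" "i \<noteq> v" using assms v1 vn by auto
    then show False using peq[of i v] i v1 vn by auto
  qed
  show "is_int (p ` {j..n})" "p ` {j..n} \<subseteq> {1..n-1}" using cyc_is_int[OF _ c nn] n2 by auto
qed

abbreviation "JJ \<equiv> cDes_perm n p"

lemma JJ_in: "JJ \<in> Jset n v"
proof -
  have "v \<in> JJ"
  proof (cases "v = n")
    case True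
    have "p 1 \<noteq> n" using peq[of 1 v] pv True n2 by auto
    then have "p 1 < p n" using pin[of 1] pv True n2 by fastforce
    then show ?thesis using cDes_n[of n p] True n2 by simp
  next
    case False
    have "p (v+1) \<noteq> n" using peq[of "v+1" v] pv False v1 vn by auto
    then have "p (v+1) < p v" using pin[of "v+1"] pv False v1 vn by fastforce
    then show ?thesis using cDes_lt[of v n p] False v1 vn by simp
  qed
  moreover have "pv n v \<notin> JJ"
  proof (cases "v = 1")
    case True
    have "\<not> p 1 < p n" using pin[of n] pv True n2 by auto
    then show ?thesis unfolding pv_def using cDes_n[of n p] True n2 by simp
  next
    case False
    have "v - 1 \<in> {1..n}" using False v1 vn by auto
    then have "\<not> p v < p (v - 1)" using pin[of "v-1"] pv by auto
    then show ?thesis unfolding pv_def using cDes_lt[of "v-1" n p] False v1 vn by simp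
  qed
  ultimately show ?thesis unfolding Jset_def using cDes_sub by auto
qed

lemma F4: assumes "1 \<le> j" "j \<le> v - 1" shows "p j = chP JJ j (p ` {1..j})"
proof (cases "j = 1")
  case True
  then show ?thesis unfolding chP_def by simp
next
  case False
  define X where "X = p ` {1..j}"
  have Xi: "is_int X" using P_int[of j] assms X_def by auto
  have fin: "finite X" using X_def by simp
  have "{1..j-1} = {1..j} - {j}" using assms by auto
  then have "p ` {1..j-1} = X - {p j}" unfolding X_def using img_diff[of "{1..j}" "{j}"] assms vn by auto
  then have Yi: "is_int (X - {p j})" using P_int[of "j-1"] assms by auto
  have pj: "p j \<in> X" using assms X_def by auto
  have jj: "j - 1 \<in> {1..n}" "j \<in> {1..n}" "j - 1 \<noteq> j" using assms False vn by auto
  have pj1: "p (j-1) \<in> X" "p (j-1) \<noteq> p j" using assms False X_def peq[OF jj(1,2)] jj(3) by auto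
  have c: "j - 1 \<in> JJ \<longleftrightarrow> p j < p (j-1)" using cDes_lt[of "j-1" n p] assms False vn by auto
  from endpoint[OF Xi Yi pj] show ?thesis
  proof
    assume m: "p j = Min X"
    then have "p j < p (j-1)" using Min_lt[OF fin pj1(1)] pj1(2) by metis
    then show ?thesis using m c unfolding chP_def X_def by simp
  next
    assume m: "p j = Max X"
    then have "p (j-1) < p j" using Max_gt[OF fin pj1(1)] pj1(2) by metis
    then show ?thesis using m c unfolding chP_def X_def by simp
  qed
qed

lemma F5: assumes "v + 1 \<le> j" "j \<le> n" shows "p j = chQ JJ j (p ` {j..n})"
proof (cases "j = n")
  case True
  then show ?thesis unfolding chQ_def by simp
next
  case False
  define X where "X = p ` {j..n}"
  have Xi: "is_int X" using Q_int[of j] assms X_def by auto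
  have fin: "finite X" using X_def by simp
  have "{j+1..n} = {j..n} - {j}" using assms by auto
  then have "p ` {j+1..n} = X - {p j}" unfolding X_def using img_diff[of "{j..n}" "{j}"] assms v1 by auto
  then have Yi: "is_int (X - {p j})" using Q_int[of "j+1"] assms by auto
  have pj: "p j \<in> X" using assms X_def by auto
  have pj1: "p (j+1) \<in> X" "p (j+1) \<noteq> p j" using assms False X_def peq[of "j+1" j] v1 by auto
  have c: "j \<in> JJ \<longleftrightarrow> p (j+1) < p j" using cDes_lt[of j n p] assms False v1 by auto
  from endpoint[OF Xi Yi pj] show ?thesis
  proof
    assume m: "p j = Min X"
    then have "p j < p (j+1)" using Min_lt[OF fin pj1(1)] pj1(2) by metis
    then show ?thesis using m c unfolding chQ_def X_def by simp
  next
    assume m: "p j = Max X"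
    then have "p (j+1) < p j" using Max_gt[OF fin pj1(1)] pj1(2) by metis
    then show ?thesis using m c unfolding chQ_def X_def by simp
  qed
qed


lemma pins: "p ` {1..v} = insert n (p ` {1..v-1})"
proof -
  have "{1..v} = insert v {1..v-1}" using v1 by auto
  then show ?thesis using pv by simp
qed

lemma F6: "p ` {1..v-1} = base n v JJ"
proof -
  define X where "X = p ` {1..v-1}"
  have Xi: "is_int X" "X \<subseteq> {1..n-1}" using P_int[of "v-1"] X_def by auto
  have "{1..v-1} \<subseteq> {1..n}" using vn by auto
  then have cX: "card X = v - 1" unfolding X_def
    by (subst card_image) (auto intro: inj_on_subset[OF pinj])
  have vJ: "v \<in> JJ" using JJ_in unfolding Jset_def by auto
  consider "v = 1" | "v = n" | "1 < v" "v < n" using v1 vn by linarith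
  then have "X = base n v JJ"
  proof cases
    case 1
    then show ?thesis unfolding X_def base_def using n2 by simp
  next
    case 2
    have "X = {1..n-1}" using Xi(2) cX 2 by (intro card_subset_eq) auto
    then show ?thesis using 2 vJ unfolding base_def by simp
  next
    case 3
    obtain m M where XmM: "X = {m..M}" using Xi is_int_def by blast
    have ne: "X \<noteq> {}" using cX 3 by auto
    then have mM: "m \<le> M" using XmM by auto
    then have m1: "1 \<le> m" "M \<le> n - 1" using Xi(2) XmM by auto
    define Y where "Y = p ` {v+1..n}"
    have Yi: "is_int Y" using Q_int[of "v+1"] vn Y_def by auto
    have Yeq: "Y = {1..n} - insert n X" unfolding Y_def X_def using p_suffix[of v] pins vn by simp
    obtain c d where Ycd: "Y = {c..d}" using Yi is_int_def by blast
    have or: "m = 1 \<or> M = n - 1"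
    proof (rule ccontr)
      assume "\<not> ?thesis"
      then have a: "1 < m" "M < n - 1" using m1 by auto
      then have "1 \<in> Y" "n - 1 \<in> Y" using Yeq XmM n2 by auto
      then have "c \<le> 1" "n - 1 \<le> d" using Ycd by auto
      then have "m \<in> Y" using Ycd a mM by auto
      moreover have "m \<in> X" using XmM mM by auto
      ultimately show False using Yeq by auto
    qed
    have p1: "p 1 \<in> X" unfolding X_def using 3 by auto
    have pn: "p n \<in> Y" unfolding Y_def using 3 by auto
    have c: "n \<in> JJ \<longleftrightarrow> p 1 < p n" using cDes_n[of n p] n2 by simp
    show ?thesis
    proof (cases "m = 1")
      case True
      then have XM: "X = {1..M}" using XmM by simp
      then have "M = v - 1" using cX by simp
      then have "p 1 < p n" using p1 pn XM Yeq by auto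
      then show ?thesis using c XM \<open>M = v - 1\<close> unfolding base_def by simp
    next
      case False
      then have "M = n - 1" using or by simp
      then have "m = n + 1 - v" using cX XmM 3 by simp
      then have "p n < p 1" using p1 pn XmM \<open>M = n - 1\<close> Yeq by auto
      then show ?thesis using c XmM \<open>M = n - 1\<close> \<open>m = n + 1 - v\<close> unfolding base_def by simp
    qed
  qed
  then show ?thesis unfolding X_def .
qed

lemma PPeq: "t \<le> v - 1 \<Longrightarrow> p ` {1..v-1-t} = PP n v JJ t"
proof (induction t)
  case 0
  then show ?case using F6 by simp
next
  case (Suc t)
  define j where "j = v - 1 - t"
  have j: "1 \<le> j" "j \<le> v - 1" "v - 1 - Suc t = j - 1" using Suc.prems by (auto simp: j_def)
  have "{1..j-1} = {1..j} - {j}" using j by auto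
  then have "p ` {1..j-1} = p ` {1..j} - {p j}" using img_diff[of "{1..j}" "{j}"] j vn by auto
  also have "\<dots> = PP n v JJ t - {chP JJ j (PP n v JJ t)}"
    using Suc F4[OF j(1,2)] by (simp add: j_def)
  also have "\<dots> = PP n v JJ (Suc t)" by (simp add: j_def)
  finally show ?case using j(3) by simp
qed

lemma QQeq: "t \<le> n - v \<Longrightarrow> p ` {v+1+t..n} = QQ n v JJ t"
proof (induction t)
  case 0
  have "p ` {v+1..n} = {1..n} - insert n (base n v JJ)" using p_suffix[of v] pins F6 vn by simp
  also have "\<dots> = {1..n-1} - base n v JJ" by auto
  finally show ?case by simp
next
  case (Suc t)
  define j where "j = v + 1 + t"
  have j: "v + 1 \<le> j" "j \<le> n" "v + 1 + Suc t = j + 1" using Suc.prems by (auto simp: j_def)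
  have "{j+1..n} = {j..n} - {j}" using j by auto
  then have "p ` {j+1..n} = p ` {j..n} - {p j}" using img_diff[of "{j..n}" "{j}"] j v1 by auto
  also have "\<dots> = QQ n v JJ t - {chQ JJ j (QQ n v JJ t)}"
    using Suc F5[OF j(1,2)] by (simp add: j_def)
  also have "\<dots> = QQ n v JJ (Suc t)" by (simp add: j_def)
  finally show ?case using j(3) by simp
qed

lemma p_eq_rho: "p = rho n v JJ"
proof
  fix x
  consider "x = v" | "1 \<le> x" "x < v" | "v < x" "x \<le> n" | "x \<notin> {1..n}" using v1 vn by force
  then show "p x = rho n v JJ x"
  proof cases
    case 1
    then show ?thesis using pv unfolding rho_def by simp
  next
    case 2
    have "Pf n v JJ x = p ` {1..x}" unfolding Pf_def using PPeq[of "v - 1 - x"] 2 by simp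
    then show ?thesis using F4[of x] 2 unfolding rho_def by simp
  next
    case 3
    have "Qf n v JJ x = p ` {x..n}" unfolding Qf_def using QQeq[of "x - (v + 1)"] 3 by simp
    then show ?thesis using F5[of x] 3 unfolding rho_def by simp
  next
    case 4
    then show ?thesis using pout v1 vn unfolding rho_def by auto
  qed
qed

end

lemma arc_bij:
  assumes n2: "n \<ge> 2"
  shows "bij_betw (\<lambda>p. (inv p n, cDes_perm n p)) (arc_perms n) (Sig n)"
proof (rule bij_betw_byWitness[where f' = "\<lambda>q. rho n (fst q) (snd q)"])
  have key: "p v = n \<and> v \<in> {1..n}" if "p \<in> arc_perms n" "v = inv p n" for p v
  proof -
    have pp: "p permutes {1..n}" using that unfolding arc_perms_def by auto
    have "p v = n" using that permutes_inverses(1)[OF pp] by simp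
    moreover have "v \<in> {1..n}" using that permutes_inv[OF pp] n2 permutes_in_image by fastforce
    ultimately show ?thesis by simp
  qed
  show "\<forall>p\<in>arc_perms n. rho n (fst (inv p n, cDes_perm n p)) (snd (inv p n, cDes_perm n p)) = p"
  proof
    fix p assume pA: "p \<in> arc_perms n"
    from key[OF pA refl] have "p (inv p n) = n" "inv p n \<in> {1..n}" by auto
    then show "rho n (fst (inv p n, cDes_perm n p)) (snd (inv p n, cDes_perm n p)) = p"
      using p_eq_rho[OF n2 _ _ pA, of "inv p n"] by auto
  qed
  show "\<forall>q\<in>Sig n. (inv (rho n (fst q) (snd q)) n, cDes_perm n (rho n (fst q) (snd q))) = q"
  proof
    fix q assume q: "q \<in> Sig n"
    obtain v J where vJ: "q = (v, J)" "v \<in> {1..n}" "J \<in> Jset n v" using q unfolding Sig_def by auto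
    have v: "1 \<le> v" "v \<le> n" using vJ by auto
    have "inv (rho n v J) n = v"
      using permutes_inv_eq[OF rho_perm[OF n2 v vJ(3)]] rho_v[OF n2 v vJ(3)] by simp
    moreover have "cDes_perm n (rho n v J) = J" using rho_cDes[OF n2 v vJ(3)] .
    ultimately show "(inv (rho n (fst q) (snd q)) n, cDes_perm n (rho n (fst q) (snd q))) = q"
      using vJ by simp
  qed
  show "(\<lambda>p. (inv p n, cDes_perm n p)) ` arc_perms n \<subseteq> Sig n"
  proof
    fix q assume "q \<in> (\<lambda>p. (inv p n, cDes_perm n p)) ` arc_perms n"
    then obtain p where pA: "p \<in> arc_perms n" and q: "q = (inv p n, cDes_perm n p)" by auto
    from key[OF pA refl] have "p (inv p n) = n" "inv p n \<in> {1..n}" by auto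
    then show "q \<in> Sig n" using JJ_in[OF n2 _ _ pA, of "inv p n"] q unfolding Sig_def by auto
  qed
  show "(\<lambda>q. rho n (fst q) (snd q)) ` Sig n \<subseteq> arc_perms n"
    using rho_arc[OF n2] unfolding Sig_def by auto
qed

lemma arc_sum:
  assumes n2: "n \<ge> 2"
  shows "(\<Sum>p\<in>arc_perms n. monom_x x (cDes_perm n p)) = (\<Sum>q\<in>Sig n. monom_x x (snd q))"
  using sum.reindex_bij_betw[OF arc_bij[OF n2], of "\<lambda>q. monom_x x (snd q)"] by simp

definition enum :: "nat set \<Rightarrow> nat \<Rightarrow> nat" where "enum S i = sorted_list_of_set S ! i"

lemma enum_in: "finite S \<Longrightarrow> i < card S \<Longrightarrow> enum S i \<in> S"
  unfolding enum_def by (metis nth_mem length_sorted_list_of_set set_sorted_list_of_set)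

lemma enum_mono: "finite S \<Longrightarrow> i < j \<Longrightarrow> j < card S \<Longrightarrow> enum S i < enum S j"
proof -
  assume a: "finite S" "i < j" "j < card S"
  have "sorted_wrt (<) (sorted_list_of_set S)" by simp
  from sorted_wrt_nth_less[OF this a(2)] a show ?thesis unfolding enum_def by simp
qed

lemma enum_img: "finite S \<Longrightarrow> enum S ` {..<card S} = S"
proof -
  assume f: "finite S"
  have "enum S ` {..<card S} = set (sorted_list_of_set S)"
  proof -
    have "set (sorted_list_of_set S) = {sorted_list_of_set S ! i | i. i < length (sorted_list_of_set S)}"
      by (rule set_conv_nth)
    then show ?thesis unfolding enum_def using f by auto
  qed
  then show ?thesis using f by simp
qed

lemma enum_unique:
  assumes f: "finite S" and mono: "\<And>i j. i < j \<Longrightarrow> j < N \<Longrightarrow> g i < g j" and img: "g ` {..<N} = S"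
    and i: "i < N"
  shows "g i = enum S i"
proof -
  have s1: "sorted_wrt (<) (map g [0..<N])"
    unfolding sorted_wrt_iff_nth_less using mono by auto
  have s2: "sorted_wrt (<) (sorted_list_of_set S)" by simp
  have "set (map g [0..<N]) = S" using img by auto
  then have "set (sorted_list_of_set S) = set (map g [0..<N])" using f by simp
  then have "sorted_list_of_set S = map g [0..<N]" using strict_sorted_equal[OF s1 s2] by simp
  then show ?thesis unfolding enum_def using i by simp
qed

definition colc :: "nat \<Rightarrow> (nat \<times> nat) set" where "colc k = {(r, 1) | r. 2 \<le> r \<and> r \<le> k + 1}"
definition rowc :: "nat \<Rightarrow> nat \<Rightarrow> (nat \<times> nat) set" where "rowc n k = {(1, c) | c. 1 \<le> c \<and> c \<le> n - k - 1}"

lemma memD: "p \<in> hook_plus_cell n k \<longleftrightarrow>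
  (fst p = 1 \<and> 1 \<le> snd p \<and> snd p \<le> n - k - 1) \<or> (snd p = 1 \<and> 2 \<le> fst p \<and> fst p \<le> k + 1) \<or> p = (0, n - k)"
  by (cases p) (auto simp: hook_plus_cell_def)

lemma mem_colc: "p \<in> colc k \<longleftrightarrow> snd p = 1 \<and> 2 \<le> fst p \<and> fst p \<le> k + 1"
  by (cases p) (auto simp: colc_def)
lemma mem_rowc: "p \<in> rowc n k \<longleftrightarrow> fst p = 1 \<and> 1 \<le> snd p \<and> snd p \<le> n - k - 1"
  by (cases p) (auto simp: rowc_def)

lemma hook_eq: "hook_plus_cell n k = rowc n k \<union> colc k \<union> {(0, n - k)}"
  using memD mem_colc mem_rowc by blast

lemma colc_img: "colc k = (\<lambda>r. (r + 2, 1)) ` {..<k}"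
proof (rule set_eqI)
  fix p :: "nat \<times> nat"
  show "p \<in> colc k \<longleftrightarrow> p \<in> (\<lambda>r. (r + 2, 1)) ` {..<k}"
  proof
    assume "p \<in> colc k"
    then have "p = (fst p - 2 + 2, 1)" "fst p - 2 < k" by (auto simp: mem_colc prod_eq_iff)
    then show "p \<in> (\<lambda>r. (r + 2, 1)) ` {..<k}" by blast
  qed (auto simp: mem_colc)
qed

lemma rowc_img: "rowc n k = (\<lambda>c. (1, c + 1)) ` {..<n - k - 1}"
proof (rule set_eqI)
  fix p :: "nat \<times> nat"
  show "p \<in> rowc n k \<longleftrightarrow> p \<in> (\<lambda>c. (1, c + 1)) ` {..<n - k - 1}"
  proof
    assume "p \<in> rowc n k"
    then have "p = (1, snd p - 1 + 1)" "snd p - 1 < n - k - 1" by (auto simp: mem_rowc prod_eq_iff)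
    then show "p \<in> (\<lambda>c. (1, c + 1)) ` {..<n - k - 1}" by blast
  qed (auto simp: mem_rowc)
qed

lemma SYT_bij: "T \<in> SYT n D \<Longrightarrow> bij_betw T D {1..n}" unfolding SYT_def by blast
lemma SYT_z: "T \<in> SYT n D \<Longrightarrow> c \<notin> D \<Longrightarrow> T c = 0" unfolding SYT_def by blast
lemma SYT_row: "T \<in> SYT n D \<Longrightarrow> (r, c) \<in> D \<Longrightarrow> (r, c') \<in> D \<Longrightarrow> c < c' \<Longrightarrow> T (r, c) < T (r, c')"
  unfolding SYT_def by blast
lemma SYT_col: "T \<in> SYT n D \<Longrightarrow> (r, c) \<in> D \<Longrightarrow> (r', c) \<in> D \<Longrightarrow> r < r' \<Longrightarrow> T (r, c) < T (r', c)"
  unfolding SYT_def by blast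
lemma SYT_I: "bij_betw T D {1..n} \<Longrightarrow> (\<And>c. c \<notin> D \<Longrightarrow> T c = 0) \<Longrightarrow>
   (\<And>r c c'. (r, c) \<in> D \<Longrightarrow> (r, c') \<in> D \<Longrightarrow> c < c' \<Longrightarrow> T (r, c) < T (r, c')) \<Longrightarrow>
   (\<And>r r' c. (r, c) \<in> D \<Longrightarrow> (r', c) \<in> D \<Longrightarrow> r < r' \<Longrightarrow> T (r, c) < T (r', c)) \<Longrightarrow> T \<in> SYT n D"
  unfolding SYT_def by blast

definition Dset :: "nat \<Rightarrow> nat \<Rightarrow> nat set \<Rightarrow> nat set" where
  "Dset n v J = (if n \<in> J then J - {n} else J - {v})"
definition Cof :: "nat \<Rightarrow> nat \<Rightarrow> nat set \<Rightarrow> nat set" where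
  "Cof n v J = Suc ` Dset n v J"
definition mkT :: "nat \<Rightarrow> nat \<Rightarrow> nat \<Rightarrow> nat set \<Rightarrow> nat \<times> nat \<Rightarrow> nat" where
  "mkT n k v C p = (if p = (0, n - k) then v
     else if fst p = 1 \<and> 1 \<le> snd p \<and> snd p \<le> n - k - 1 then enum ({1..n} - C - {v}) (snd p - 1)
     else if snd p = 1 \<and> 2 \<le> fst p \<and> fst p \<le> k + 1 then enum C (fst p - 2) else 0)"

context
  fixes n k :: nat and T :: "nat \<times> nat \<Rightarrow> nat"
  assumes n2: "n \<ge> 2" and kn: "k + 2 \<le> n" and TS: "T \<in> SYT n (hook_plus_cell n k)"
begin

abbreviation "D \<equiv> hook_plus_cell n k"

lemma Tbij: "bij_betw T D {1..n}" using SYT_bij[OF TS] .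
lemma Tinj: "inj_on T D" using Tbij unfolding bij_betw_def by (rule conjunct1)
lemma Timg: "T ` D = {1..n}" using Tbij unfolding bij_betw_def by (rule conjunct2)
lemma Tz: "c \<notin> D \<Longrightarrow> T c = 0" using SYT_z[OF TS] .
lemma Trow: "(r, c) \<in> D \<Longrightarrow> (r, c') \<in> D \<Longrightarrow> c < c' \<Longrightarrow> T (r, c) < T (r, c')"
  using SYT_row[OF TS] .
lemma Tcol: "(r, c) \<in> D \<Longrightarrow> (r', c) \<in> D \<Longrightarrow> r < r' \<Longrightarrow> T (r, c) < T (r', c)"
  using SYT_col[OF TS] .
lemma Teq: "p \<in> D \<Longrightarrow> q \<in> D \<Longrightarrow> T p = T q \<longleftrightarrow> p = q"
  by (rule inj_on_eq_iff[OF Tinj])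
lemma Tin: "p \<in> D \<Longrightarrow> T p \<in> {1..n}" using Timg by (metis imageI)

lemma rowof: "p \<in> D \<Longrightarrow> row_of D T (T p) = fst p"
  unfolding row_of_def
proof -
  assume p: "p \<in> D"
  have u: "\<And>q. q \<in> D \<and> T q = T p \<Longrightarrow> q = p" using Teq p by blast
  have "(THE q. q \<in> D \<and> T q = T p) = p"
    using p u by (intro the_equality) auto
  then show "fst (THE q. q \<in> D \<and> T q = T p) = fst p" by simp
qed

lemma cell_ex: "i \<in> {1..n} \<Longrightarrow> \<exists>p\<in>D. T p = i"
  using Timg by (metis imageE)

lemma isoD: "(0, n - k) \<in> D" using memD by simp
lemma cornerD: "(1, 1) \<in> D" using kn memD by simp
lemma colD: "colc k \<subseteq> D" using hook_eq by blast
lemma rowD: "rowc n k \<subseteq> D" using hook_eq by blast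

definition "vv = T (0, n - k)"
definition "CC = T ` colc k"

lemma vv_in: "vv \<in> {1..n}" unfolding vv_def using Tin isoD by blast

lemma CC_sub: "CC \<subseteq> {2..n}"
proof
  fix x assume "x \<in> CC"
  then obtain r where r: "2 \<le> r" "r \<le> k + 1" "x = T (r, 1)" unfolding CC_def colc_def by auto
  have rD: "(r, 1) \<in> D" using r colD unfolding colc_def by auto
  have "T (1, 1) < T (r, 1)" using Tcol[OF cornerD rD] r by simp
  moreover have "T (1, 1) \<ge> 1" using Tin[OF cornerD] by simp
  moreover have "T (r, 1) \<le> n" using Tin[OF rD] by simp
  ultimately show "x \<in> {2..n}" using r by simp
qed

lemma CC_el: "x \<in> CC \<Longrightarrow> 2 \<le> x \<and> x \<le> n" using CC_sub by auto

lemma CC_card: "card CC = k"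
proof -
  have "card CC = card (colc k)" unfolding CC_def using inj_on_subset[OF Tinj colD] by (simp add: card_image)
  also have "\<dots> = k" unfolding colc_img by (subst card_image) (auto simp: inj_on_def)
  finally show ?thesis .
qed

lemma vv_notin: "vv \<notin> CC"
proof
  assume "vv \<in> CC"
  then obtain q where "q \<in> colc k" "T q = T (0, n - k)" unfolding CC_def vv_def by auto
  then have "q \<in> D" using colD by blast
  then have "q = (0, n - k)" using Teq[OF _ isoD] \<open>T q = T (0, n - k)\<close> by blast
  then show False using \<open>q \<in> colc k\<close> by (simp add: mem_colc)
qed

lemma vv1: "vv = 1 \<Longrightarrow> 2 \<notin> CC"
proof
  assume v: "vv = 1" and "2 \<in> CC"
  then obtain r where r: "2 \<le> r" "r \<le> k + 1" "2 = T (r, 1)" unfolding CC_def colc_def by auto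
  have rD: "(r, 1) \<in> D" using r colD unfolding colc_def by auto
  have "T (1, 1) < 2" using Tcol[OF cornerD rD] r by simp
  moreover have "T (1, 1) \<ge> 1" using Tin[OF cornerD] by simp
  moreover have "T (1, 1) \<noteq> vv" unfolding vv_def using Teq[OF cornerD isoD] kn by simp
  ultimately show False using v by simp
qed

lemma Des_char: "Des_T n D T = {i \<in> {1..n-1}. i + 1 \<in> CC \<or> i = vv}"
proof (rule set_eqI)
  fix i
  show "i \<in> Des_T n D T \<longleftrightarrow> i \<in> {i \<in> {1..n-1}. i + 1 \<in> CC \<or> i = vv}"
  proof (cases "i \<in> {1..n-1}")
    case False
    then show ?thesis unfolding Des_T_def by auto
  next
    case True
    have ii: "i \<in> {1..n}" "i + 1 \<in> {1..n}" using True by auto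
    obtain p where p: "p \<in> D" "T p = i" using cell_ex[OF ii(1)] by auto
    obtain q where q: "q \<in> D" "T q = i + 1" using cell_ex[OF ii(2)] by auto
    have pq: "p \<noteq> q" using p q by auto
    have d: "i \<in> Des_T n D T \<longleftrightarrow> fst p < fst q"
      unfolding Des_T_def using True rowof[OF p(1)] rowof[OF q(1)] p(2) q(2) by auto
    have c: "i + 1 \<in> CC \<longleftrightarrow> q \<in> colc k"
    proof
      assume "i + 1 \<in> CC"
      then obtain q' where "q' \<in> colc k" "T q' = i + 1" unfolding CC_def by auto
      then have q'D: "q' \<in> D" using colD by blast
      have "q' = q" using Teq[OF q'D q(1)] q(2) \<open>T q' = i + 1\<close> by simp
      then show "q \<in> colc k" using \<open>q' \<in> colc k\<close> by simp
    next
      assume "q \<in> colc k"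
      then show "i + 1 \<in> CC" unfolding CC_def using q(2) by (metis imageI)
    qed
    have vi0: "i = vv \<longleftrightarrow> T p = T (0, n - k)" using p(2) unfolding vv_def by simp
    have vi: "i = vv \<longleftrightarrow> p = (0, n - k)" using vi0 Teq[OF p(1) isoD] by simp
    have goal: "fst p < fst q \<longleftrightarrow> q \<in> colc k \<or> p = (0, n - k)"
    proof (cases "q \<in> colc k")
      case True
      obtain r where r: "q = (r, 1)" "2 \<le> r" "r \<le> k + 1" using True by (cases q) (auto simp: mem_colc)
      have "fst p < r"
      proof (rule ccontr)
        assume "\<not> fst p < r"
        then have "fst p \<ge> 2" using r by simp
        then have p1: "snd p = 1" "fst p \<le> k + 1" using p(1) memD[of p n k] by auto
        obtain a where pe: "p = (a, 1)" using p1 by (cases p) simp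
        show False
        proof (cases "a = r")
          case True then show False using pq pe r(1) by simp
        next
          case False
          then have "r < a" using \<open>\<not> fst p < r\<close> pe by simp
          have a1: "(r, 1) \<in> D" using q(1) r(1) by simp
          have a2: "(a, 1) \<in> D" using p(1) pe by simp
          have "T (r, 1) < T (a, 1)" using Tcol[OF a1 a2 \<open>r < a\<close>] .
          then show False using p(2) q(2) r(1) pe by simp
        qed
      qed
      then show ?thesis using True r by simp
    next
      case False
      then consider "fst q = 1" | "q = (0, n - k)" using q(1) memD[of q n k] mem_colc[of q k] by auto
      then show ?thesis
      proof cases
        case 1
        have "fst p = 0 \<longleftrightarrow> p = (0, n - k)" using p(1) memD[of p n k] by auto
        then show ?thesis using 1 False by auto
      next
        case 2
        then show ?thesis using False pq by auto
      qed
    qed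
    have "i \<in> Des_T n D T \<longleftrightarrow> (i + 1 \<in> CC \<or> i = vv)" using d c vi goal by simp
    then show ?thesis using True by simp
  qed
qed


definition "EE = (\<lambda>c. c - 1) ` CC"

lemma EE_iff: "i \<in> EE \<longleftrightarrow> i + 1 \<in> CC"
proof
  assume "i \<in> EE"
  then obtain c where "c \<in> CC" "i = c - 1" unfolding EE_def by auto
  moreover then have "c \<ge> 2" using CC_el by auto
  ultimately show "i + 1 \<in> CC" by simp
next
  assume "i + 1 \<in> CC"
  then show "i \<in> EE" unfolding EE_def by (intro image_eqI[where x = "i + 1"]) auto
qed

lemma EE_sub: "EE \<subseteq> {1..n-1}"
proof
  fix x assume "x \<in> EE"
  then obtain c where "c \<in> CC" "x = c - 1" unfolding EE_def by auto
  then show "x \<in> {1..n-1}" using CC_el[of c] by auto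
qed

lemma EE_el: "x \<in> EE \<Longrightarrow> 1 \<le> x \<and> x \<le> n - 1" using EE_sub by auto

lemma EE_card: "card EE = k"
proof -
  have "inj_on (\<lambda>c. c - 1) CC"
  proof (rule inj_onI)
    fix x y assume "x \<in> CC" "y \<in> CC" "x - 1 = y - 1"
    then show "x = y" using CC_el[of x] CC_el[of y] by linarith
  qed
  then show ?thesis unfolding EE_def using CC_card by (simp add: card_image)
qed

lemma EE_fin: "finite EE" unfolding EE_def CC_def colc_img by simp

lemma Des_EE: "Des_T n D T = (if vv = n then EE else insert vv EE)"
proof -
  have "Des_T n D T = {i \<in> {1..n-1}. i \<in> EE \<or> i = vv}" using Des_char EE_iff by simp
  also have "\<dots> = (if vv = n then EE else insert vv EE)"
  proof (cases "vv = n")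
    case True
    then show ?thesis using EE_el by auto
  next
    case False
    then show ?thesis using EE_el vv_in by auto
  qed
  finally show ?thesis .
qed

lemma cDes_EE: "cDes_T n k T = (if vv = n \<or> vv \<in> EE then insert n EE else insert vv EE)"
proof (cases "vv = n \<or> vv \<in> EE")
  case True
  then have "Des_T n D T = EE" using Des_EE by auto
  then show ?thesis using True EE_card unfolding cDes_T_def Let_def by simp
next
  case False
  then have d: "Des_T n D T = insert vv EE" using Des_EE by auto
  have "card (insert vv EE) = k + 1" using False EE_card EE_fin by simp
  then show ?thesis using False d unfolding cDes_T_def Let_def by simp
qed

lemma vvEE1: "vv = 1 \<Longrightarrow> 1 \<notin> EE" using vv1 EE_iff[of 1] by (simp add: numeral_2_eq_2)
lemma vvEE2: "vv \<ge> 2 \<Longrightarrow> vv - 1 \<notin> EE" using vv_notin EE_iff by simp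

lemma Sig_T: "(vv, cDes_T n k T) \<in> Sig n"
proof -
  have nE: "n \<notin> EE" using EE_el n2 by force
  have sub: "cDes_T n k T \<subseteq> {1..n}"
  proof
    fix x assume "x \<in> cDes_T n k T"
    then have "x = n \<or> x = vv \<or> x \<in> EE" unfolding cDes_EE by (auto split: if_splits)
    then show "x \<in> {1..n}" using EE_el[of x] vv_in n2 by auto
  qed
  have vin: "vv \<in> cDes_T n k T" unfolding cDes_EE by auto
  have pvn: "pv n vv \<notin> cDes_T n k T"
  proof (cases "vv = 1")
    case True
    then show ?thesis unfolding cDes_EE pv_def using vvEE1 nE n2 by auto
  next
    case False
    then have "vv \<ge> 2" using vv_in by auto
    then show ?thesis unfolding cDes_EE pv_def using vvEE2 False vv_in by auto
  qed
  show ?thesis unfolding Sig_def Jset_def using sub vin pvn vv_in by auto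
qed

lemma Dset_T: "Dset n vv (cDes_T n k T) = EE"
proof -
  have nE: "n \<notin> EE" using EE_el n2 by force
  show ?thesis
  proof (cases "vv = n \<or> vv \<in> EE")
    case True
    then show ?thesis unfolding Dset_def cDes_EE using nE by auto
  next
    case False
    then show ?thesis unfolding Dset_def cDes_EE using nE by auto
  qed
qed

lemma Cof_T: "Cof n vv (cDes_T n k T) = CC"
proof -
  have "Suc ` EE = CC"
  proof (rule set_eqI)
    fix x
    show "x \<in> Suc ` EE \<longleftrightarrow> x \<in> CC"
    proof
      assume "x \<in> Suc ` EE" then show "x \<in> CC" using EE_iff by auto
    next
      assume "x \<in> CC"
      then have "x \<ge> 2" "x - 1 \<in> EE" using CC_sub EE_iff by auto
      then show "x \<in> Suc ` EE" by (intro image_eqI[where x = "x - 1"]) auto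
    qed
  qed
  then show ?thesis unfolding Cof_def Dset_T .
qed

lemma rowimg: "T ` rowc n k = {1..n} - CC - {vv}"
proof (rule set_eqI)
  fix x
  show "x \<in> T ` rowc n k \<longleftrightarrow> x \<in> {1..n} - CC - {vv}"
  proof
    assume "x \<in> T ` rowc n k"
    then obtain p where p: "p \<in> rowc n k" "x = T p" by auto
    have pD: "p \<in> D" using p rowD by blast
    have "x \<notin> CC"
    proof
      assume "x \<in> CC"
      then obtain q where q: "q \<in> colc k" "x = T q" unfolding CC_def by auto
      then have "q \<in> D" using colD by blast
      have "T p = T q" using p(2) q(2) by simp
      then have "p = q" using Teq[OF pD \<open>q \<in> D\<close>] by simp
      then show False using p(1) q(1) by (simp add: mem_rowc mem_colc)
    qed
    moreover have "x \<noteq> vv"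
    proof
      assume "x = vv"
      then have "p = (0, n - k)" using Teq[OF pD isoD] p unfolding vv_def by simp
      then show False using p(1) by (simp add: mem_rowc)
    qed
    ultimately show "x \<in> {1..n} - CC - {vv}" using Tin[OF pD] p by simp
  next
    assume x: "x \<in> {1..n} - CC - {vv}"
    then obtain p where p: "p \<in> D" "T p = x" using cell_ex by blast
    have "p \<notin> colc k" using x p unfolding CC_def by auto
    moreover have "p \<noteq> (0, n - k)" using x p unfolding vv_def by auto
    ultimately have "p \<in> rowc n k" using p(1) hook_eq by blast
    then show "x \<in> T ` rowc n k" using p by (metis imageI)
  qed
qed

lemma T_eq_mkT: "T = mkT n k vv CC"
proof
  fix p
  define R where "R = {1..n} - CC - {vv}"
  have finR: "finite R" unfolding R_def by simp
  have finC: "finite CC" unfolding CC_def colc_img by simp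
  consider "p = (0, n - k)" | "p \<in> rowc n k" | "p \<in> colc k" | "p \<notin> D"
    using hook_eq by blast
  then show "T p = mkT n k vv CC p"
  proof cases
    case 1
    then show ?thesis unfolding mkT_def vv_def by simp
  next
    case 2
    define g where "g i = T (1, i + 1)" for i
    have mono: "g i < g j" if "i < j" "j < n - k - 1" for i j
      unfolding g_def using Trow[of 1 "i+1" "j+1"] that memD by simp
    have img: "g ` {..<n - k - 1} = R" unfolding g_def R_def rowimg[symmetric] rowc_img by auto
    obtain c where pp: "p = (1, c)" "1 \<le> c" "c \<le> n - k - 1" using 2 by (cases p) (auto simp: mem_rowc)
    have "g (c - 1) = enum R (c - 1)" using enum_unique[OF finR mono img] pp by simp
    moreover have "g (c - 1) = T p" unfolding g_def using pp by simp
    moreover have "mkT n k vv CC p = enum R (c - 1)" unfolding mkT_def R_def using pp by simp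
    ultimately show ?thesis by simp
  next
    case 3
    define g where "g i = T (i + 2, 1)" for i
    have mono: "g i < g j" if "i < j" "j < k" for i j
      unfolding g_def using Tcol[of "i+2" 1 "j+2"] that memD by simp
    have img: "g ` {..<k} = CC" unfolding g_def CC_def colc_img by auto
    obtain r where pp: "p = (r, 1)" "2 \<le> r" "r \<le> k + 1" using 3 by (cases p) (auto simp: mem_colc)
    have "g (r - 2) = enum CC (r - 2)" using enum_unique[OF finC mono img] pp by simp
    moreover have "g (r - 2) = T p"
    proof -
      have e: "r - 2 + 2 = r" using pp(2) by simp
      show ?thesis unfolding g_def e pp(1) by (rule refl)
    qed
    moreover have "mkT n k vv CC p = enum CC (r - 2)" unfolding mkT_def using pp by simp
    ultimately show ?thesis by simp
  next
    case 4
    then have "T p = 0" using Tz by blast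
    moreover have "mkT n k vv CC p = 0" using 4 memD[of p n k] unfolding mkT_def by auto
    ultimately show ?thesis by simp
  qed
qed


lemma cDes_formula: "cDes_T n k T = (if T (0, n - k) = n \<or> T (0, n - k) \<in> (\<lambda>c. c - 1) ` (T ` colc k)
   then insert n ((\<lambda>c. c - 1) ` (T ` colc k)) else insert (T (0, n - k)) ((\<lambda>c. c - 1) ` (T ` colc k)))"
  using cDes_EE unfolding EE_def CC_def vv_def .

lemma main_T: "(T (0, n - k), cDes_T n k T) \<in> Sig n \<and> card (Dset n (T (0, n - k)) (cDes_T n k T)) = k \<and>
   mkT n k (T (0, n - k)) (Cof n (T (0, n - k)) (cDes_T n k T)) = T"
  using Sig_T Dset_T EE_card Cof_T T_eq_mkT unfolding vv_def by simp

end

context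
  fixes n k v :: nat and J :: "nat set"
  assumes n2: "n \<ge> 2" and kn: "k + 2 \<le> n" and vJ: "(v, J) \<in> Sig n" and ck: "card (Dset n v J) = k"
begin

lemma v_in: "v \<in> {1..n}" and tJ_sub: "J \<subseteq> {1..n}" and v_J: "v \<in> J" and pv_J: "pv n v \<notin> J"
  using vJ unfolding Sig_def Jset_def by auto

abbreviation "DS \<equiv> Dset n v J"
abbreviation "C \<equiv> Cof n v J"
abbreviation "R \<equiv> {1..n} - C - {v}"
abbreviation "M \<equiv> mkT n k v C"

lemma DS_el: "x \<in> DS \<Longrightarrow> 1 \<le> x \<and> x \<le> n - 1"
proof -
  assume x: "x \<in> DS"
  then have xJ: "x \<in> J" "x \<noteq> n" using v_J unfolding Dset_def by (auto split: if_splits)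
  then have "x \<le> n" "1 \<le> x" using tJ_sub by auto
  then show ?thesis using xJ(2) by linarith
qed

lemma DS_J: "DS \<subseteq> J" unfolding Dset_def by auto

lemma C_el: "x \<in> C \<Longrightarrow> 2 \<le> x \<and> x \<le> n"
  unfolding Cof_def using DS_el by fastforce

lemma finDS: "finite DS" using tJ_sub finite_subset DS_J by (metis finite_atLeastAtMost subset_trans)
lemma finC: "finite C" unfolding Cof_def using finDS by simp
lemma cardC: "card C = k" unfolding Cof_def using ck by (simp add: card_image)

lemma v_notC: "v \<notin> C"
proof
  assume "v \<in> C"
  then obtain d where d: "d \<in> DS" "v = Suc d" unfolding Cof_def by auto
  then have "d \<in> J" "d \<ge> 1" using DS_J DS_el by auto
  moreover have "pv n v = d" unfolding pv_def using d \<open>d \<ge> 1\<close> by simp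
  ultimately show False using pv_J by simp
qed

lemma v1C: "v = 1 \<Longrightarrow> 2 \<notin> C"
proof
  assume v: "v = 1" and "2 \<in> C"
  then obtain d where d: "d \<in> DS" "2 = Suc d" unfolding Cof_def by auto
  have "n \<notin> J" using pv_J v unfolding pv_def by simp
  then have "DS = J - {1}" using v unfolding Dset_def by simp
  then show False using d by simp
qed

lemma finR: "finite R" by simp
lemma cardR: "card R = n - k - 1"
proof -
  have "R = {1..n} - insert v C" by auto
  moreover have "insert v C \<subseteq> {1..n}"
  proof
    fix x assume "x \<in> insert v C"
    then have "x = v \<or> x \<in> C" by simp
    then show "x \<in> {1..n}" using v_in C_el[of x] by auto
  qed
  moreover have "card (insert v C) = k + 1" using v_notC finC cardC by simp
  ultimately show ?thesis by (simp add: card_Diff_subset finC)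
qed

lemma M_iso: "M (0, n - k) = v" unfolding mkT_def by simp
lemma M_row: "1 \<le> c \<Longrightarrow> c \<le> n - k - 1 \<Longrightarrow> M (1, c) = enum R (c - 1)" unfolding mkT_def by simp
lemma M_col: "2 \<le> r \<Longrightarrow> r \<le> k + 1 \<Longrightarrow> M (r, 1) = enum C (r - 2)" unfolding mkT_def by simp
lemma M_out: "p \<notin> hook_plus_cell n k \<Longrightarrow> M p = 0" unfolding mkT_def using memD[of p n k] by auto

lemma M_rowimg: "M ` rowc n k = R"
proof -
  have "M ` rowc n k = (\<lambda>c. M (1, c + 1)) ` {..<n - k - 1}" unfolding rowc_img by (simp add: image_image)
  also have "\<dots> = enum R ` {..<n - k - 1}" using M_row by (intro image_cong) auto
  also have "\<dots> = R" using enum_img[OF finR] cardR by simp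
  finally show ?thesis .
qed

lemma M_colimg: "M ` colc k = C"
proof -
  have "M ` colc k = (\<lambda>r. M (r + 2, 1)) ` {..<k}" unfolding colc_img by (simp add: image_image)
  also have "\<dots> = enum C ` {..<k}" using M_col by (intro image_cong) auto
  also have "\<dots> = C" using enum_img[OF finC] cardC by simp
  finally show ?thesis .
qed

lemma M_img: "M ` hook_plus_cell n k = {1..n}"
proof -
  have "M ` hook_plus_cell n k = R \<union> C \<union> {v}" unfolding hook_eq using M_rowimg M_colimg M_iso by auto
  also have "\<dots> = {1..n}"
  proof
    show "R \<union> C \<union> {v} \<subseteq> {1..n}"
    proof
      fix x assume "x \<in> R \<union> C \<union> {v}"
      then have "x \<in> R \<or> x \<in> C \<or> x = v" by blast
      then show "x \<in> {1..n}" using v_in C_el[of x] by auto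
    qed
  qed auto
  finally show ?thesis .
qed

lemma cardD: "card (hook_plus_cell n k) \<le> n"
proof -
  have a: "card (hook_plus_cell n k) \<le> card (rowc n k \<union> colc k) + card {(0, n - k)}"
    using card_Un_le[of "rowc n k \<union> colc k" "{(0, n - k)}"] hook_eq[of n k] by simp
  have b: "card (rowc n k \<union> colc k) \<le> card (rowc n k) + card (colc k)" by (rule card_Un_le)
  have c: "card (rowc n k) \<le> n - k - 1" unfolding rowc_img using card_image_le by fastforce
  have d: "card (colc k) \<le> k" unfolding colc_img using card_image_le by fastforce
  show ?thesis using a b c d kn by simp
qed

lemma M_bij: "bij_betw M (hook_plus_cell n k) {1..n}"
proof -
  have fin: "finite (hook_plus_cell n k)" unfolding hook_eq rowc_img colc_img by simp
  have "card (M ` hook_plus_cell n k) = n" using M_img by simp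
  moreover have "card (M ` hook_plus_cell n k) \<le> card (hook_plus_cell n k)" using card_image_le fin by blast
  ultimately have "card (M ` hook_plus_cell n k) = card (hook_plus_cell n k)" using cardD by simp
  then have "inj_on M (hook_plus_cell n k)" using eq_card_imp_inj_on fin by blast
  then show ?thesis using M_img unfolding bij_betw_def by simp
qed

lemma R_min: "x \<in> C \<Longrightarrow> enum R 0 < x"
proof -
  assume x: "x \<in> C"
  have le: "enum R 0 \<le> y" if "y \<in> R" for y
  proof -
    have "y \<in> enum R ` {..<card R}" using that enum_img[OF finR] by simp
    then obtain i where i: "i < card R" "y = enum R i" by auto
    show ?thesis
    proof (cases "i = 0")
      case True then show ?thesis using i by simp
    next
      case False
      then have "enum R 0 < enum R i" using enum_mono[OF finR, of 0 i] i by simp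
      then show ?thesis using i by simp
    qed
  qed
  have cx: "2 \<le> x" "x \<le> n" using C_el[OF x] by auto
  show ?thesis
  proof (cases "v = 1")
    case True
    have "2 \<notin> C" using v1C True by blast
    then have "2 \<in> R" using True n2 by simp
    moreover have "x \<noteq> 2" using \<open>2 \<notin> C\<close> x by blast
    ultimately show ?thesis using le[of 2] cx by simp
  next
    case False
    have "1 \<notin> C" using C_el by fastforce
    then have "1 \<in> R" using False n2 by simp
    then show ?thesis using le[of 1] cx by simp
  qed
qed

lemma M_SYT: "M \<in> SYT n (hook_plus_cell n k)"
proof (rule SYT_I)
  show "bij_betw M (hook_plus_cell n k) {1..n}" by (rule M_bij)
  show "\<And>c. c \<notin> hook_plus_cell n k \<Longrightarrow> M c = 0" by (rule M_out)
  show "M (r, c) < M (r, c')" if a: "(r, c) \<in> hook_plus_cell n k" "(r, c') \<in> hook_plus_cell n k" "c < c'" for r c c'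
  proof -
    have "r = 1" using a memD[of "(r,c)" n k] memD[of "(r,c')" n k] by auto
    then have "1 \<le> c" "c' \<le> n - k - 1" using a memD[of "(r,c)" n k] memD[of "(r,c')" n k] by auto
    then show ?thesis using M_row[of c] M_row[of c'] \<open>r = 1\<close> a(3) enum_mono[OF finR, of "c - 1" "c' - 1"] cardR
      by simp
  qed
  show "M (r, c) < M (r', c)" if a: "(r, c) \<in> hook_plus_cell n k" "(r', c) \<in> hook_plus_cell n k" "r < r'" for r r' c
  proof -
    have c1: "c = 1" "2 \<le> r'" "r' \<le> k + 1" using a memD[of "(r,c)" n k] memD[of "(r',c)" n k] kn by auto
    show ?thesis
    proof (cases "r = 1")
      case True
      have "M (r', c) \<in> C" using M_col[OF c1(2,3)] c1(1) enum_in[OF finC] cardC c1 by simp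
      then show ?thesis using R_min M_row[of 1] True c1(1) kn by simp
    next
      case False
      then have "2 \<le> r" using a memD[of "(r,c)" n k] c1 kn by auto
      then show ?thesis using M_col[of r] M_col[OF c1(2,3)] c1 a(3) enum_mono[OF finC, of "r - 2" "r' - 2"] cardC
        by simp
    qed
  qed
qed

lemma M_cDes: "cDes_T n k M = J"
proof -
  have "(\<lambda>c. c - 1) ` (M ` colc k) = (\<lambda>c. c - 1) ` C" using M_colimg by simp
  also have "\<dots> = DS" unfolding Cof_def by (simp add: image_image)
  finally have E: "(\<lambda>c. c - 1) ` (M ` colc k) = DS" .
  have f: "cDes_T n k M = (if v = n \<or> v \<in> DS then insert n DS else insert v DS)"
    using cDes_formula[OF n2 kn M_SYT] unfolding E M_iso .
  show ?thesis
  proof (cases "n \<in> J")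
    case True
    then have "DS = J - {n}" unfolding Dset_def by simp
    then show ?thesis using f True v_J by auto
  next
    case False
    then have "DS = J - {v}" "v \<noteq> n" using v_J unfolding Dset_def by auto
    then show ?thesis using f v_J by auto
  qed
qed

end

lemma tab_bij:
  assumes n2: "n \<ge> 2" and kn: "k + 2 \<le> n"
  shows "bij_betw (\<lambda>T. (T (0, n - k), cDes_T n k T)) (SYT n (hook_plus_cell n k))
           {q \<in> Sig n. card (Dset n (fst q) (snd q)) = k}"
proof (rule bij_betw_byWitness[where f' = "\<lambda>q. mkT n k (fst q) (Cof n (fst q) (snd q))"])
  show "\<forall>T\<in>SYT n (hook_plus_cell n k).
     mkT n k (fst (T (0, n - k), cDes_T n k T)) (Cof n (fst (T (0, n - k), cDes_T n k T)) (snd (T (0, n - k), cDes_T n k T))) = T"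
    using main_T[OF n2 kn] by simp
  show "\<forall>q\<in>{q \<in> Sig n. card (Dset n (fst q) (snd q)) = k}.
     (mkT n k (fst q) (Cof n (fst q) (snd q)) (0, n - k), cDes_T n k (mkT n k (fst q) (Cof n (fst q) (snd q)))) = q"
  proof
    fix q assume q: "q \<in> {q \<in> Sig n. card (Dset n (fst q) (snd q)) = k}"
    obtain v J where vJ: "q = (v, J)" by (cases q)
    have a: "(v, J) \<in> Sig n" "card (Dset n v J) = k" using q vJ by auto
    show "(mkT n k (fst q) (Cof n (fst q) (snd q)) (0, n - k), cDes_T n k (mkT n k (fst q) (Cof n (fst q) (snd q)))) = q"
      using M_iso[OF n2 kn a] M_cDes[OF n2 kn a] vJ by simp
  qed
  show "(\<lambda>T. (T (0, n - k), cDes_T n k T)) ` SYT n (hook_plus_cell n k) \<subseteq> {q \<in> Sig n. card (Dset n (fst q) (snd q)) = k}"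
    using main_T[OF n2 kn] by auto
  show "(\<lambda>q. mkT n k (fst q) (Cof n (fst q) (snd q))) ` {q \<in> Sig n. card (Dset n (fst q) (snd q)) = k} \<subseteq> SYT n (hook_plus_cell n k)"
  proof
    fix T assume "T \<in> (\<lambda>q. mkT n k (fst q) (Cof n (fst q) (snd q))) ` {q \<in> Sig n. card (Dset n (fst q) (snd q)) = k}"
    then obtain v J where a: "(v, J) \<in> Sig n" "card (Dset n v J) = k" and T: "T = mkT n k v (Cof n v J)" by auto
    show "T \<in> SYT n (hook_plus_cell n k)" using M_SYT[OF n2 kn a] T by simp
  qed
qed

lemma card_two_out: assumes "a \<in> {1..n}" "b \<in> {1..n}" "a \<noteq> b" "X \<subseteq> {1..n} - {a, b}"
  shows "card X \<le> n - 2"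
proof -
  have "card X \<le> card ({1..n} - {a, b})" using assms(4) by (intro card_mono) auto
  also have "\<dots> = n - 2" using assms by (subst card_Diff_subset) auto
  finally show ?thesis .
qed

lemma Dset_le: assumes n2: "n \<ge> 2" and vJ: "(v, J) \<in> Sig n" shows "card (Dset n v J) \<le> n - 2"
proof -
  have J: "J \<subseteq> {1..n}" "v \<in> J" "pv n v \<notin> J" "v \<in> {1..n}" using vJ unfolding Sig_def Jset_def by auto
  show ?thesis
  proof (cases "n \<in> J")
    case True
    then have v1: "v \<noteq> 1" using J unfolding pv_def by auto
    then have pv: "pv n v = v - 1" unfolding pv_def by simp
    have "v - 1 \<in> {1..n}" "v - 1 \<noteq> n" using J v1 by auto
    moreover have "Dset n v J \<subseteq> {1..n} - {n, v - 1}" unfolding Dset_def using True J pv by auto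
    ultimately show ?thesis using card_two_out[of n n "v - 1"] n2 by auto
  next
    case False
    then have "v \<noteq> n" using J by auto
    moreover have "Dset n v J \<subseteq> {1..n} - {n, v}" unfolding Dset_def using False J by auto
    ultimately show ?thesis using card_two_out[of n n v] n2 J by auto
  qed
qed

lemma finite_Sig: "finite (Sig n)"
proof (rule finite_subset)
  show "Sig n \<subseteq> {1..n} \<times> Pow {1..n}" unfolding Sig_def Jset_def by auto
qed simp

theorem theorem6p11:
  fixes n :: nat and x :: "nat \<Rightarrow> 'a::comm_ring_1"
  assumes "n \<ge> 2"
  shows "(\<Sum>\<pi>\<in>arc_perms n. monom_x x (cDes_perm n \<pi>)) =
         (\<Sum>k = 0..n - 2. \<Sum>T\<in>SYT n (hook_plus_cell n k). monom_x x (cDes_T n k T))"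
proof -
  have "(\<Sum>k = 0..n - 2. \<Sum>T\<in>SYT n (hook_plus_cell n k). monom_x x (cDes_T n k T)) =
        (\<Sum>k = 0..n - 2. \<Sum>q\<in>{q \<in> Sig n. card (Dset n (fst q) (snd q)) = k}. monom_x x (snd q))"
  proof (rule sum.cong[OF refl])
    fix k assume "k \<in> {0..n - 2}"
    then have kn: "k + 2 \<le> n" using assms by auto
    show "(\<Sum>T\<in>SYT n (hook_plus_cell n k). monom_x x (cDes_T n k T)) =
          (\<Sum>q\<in>{q \<in> Sig n. card (Dset n (fst q) (snd q)) = k}. monom_x x (snd q))"
      using sum.reindex_bij_betw[OF tab_bij[OF assms kn], of "\<lambda>q. monom_x x (snd q)"] by simp
  qed
  also have "\<dots> = (\<Sum>q\<in>Sig n. monom_x x (snd q))"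
  proof (rule sum.group)
    show "finite (Sig n)" by (rule finite_Sig)
    show "finite {0..n - 2}" by simp
    show "(\<lambda>q. card (Dset n (fst q) (snd q))) ` Sig n \<subseteq> {0..n - 2}"
      using Dset_le[OF assms] by force
  qed
  finally show ?thesis using arc_sum[OF assms] by simp
qed

end
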